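(* Let $V$ be a finite nonempty set of voters, $A$ a finite set of alternatives, and $F:\mathcal{P}(V,A)\to S_2(A)$ an irreducible, weakly viable consular election rule satisfying SPP and SPO. Let $R\subseteq S_2(A)$ be the range of $F$ and let $D=\{\alpha(L)|_R : L \text{ a linear order on } A\}$. Then $D$ is a linked domain of linear orders over the set $R$.
   Context: A profile assigns to each voter $i\in V$ a linear order $P_i$ on $A$; $P_i'P_{-i}$ replaces voter $i$'s order by $P_i'$; $P|_B$ denotes restriction to $B\subseteq A$. $S_2(A)$ is the set of 2-element subsets of $A$; a consular election rule is a map $F:\mathcal{P}(V,A)\to S_2(A)$. $\mathrm{best}(P_i,W)$, $\mathrm{worst}(P_i,W)$ denote the $P_i$-best and $P_i$-worst elements of nonempty $W\subseteq A$. SPO: for all $P$, $i$, $P_i'$, $\mathrm{best}(P_i,F(P))\succeq_i\mathrm{best}(P_i,F(P_i'P_{-i}))$; SPP: same with $\mathrm{worst}$. Weakly viable: every $a\in A$ lies in $F(P)$ for some $P$. Reducible: there is a partition $A=B\uplus C$ and social choice functions $G:\mathcal{P}(V,B)\to B$, $H:\mathcal{P}(V,C)\to C$ with $F(P)=\{G(P|_B),H(P|_C)\}$ for all $P$; irreducible means not reducible. For a linear order $L$ on $A$, $\alpha(L)$ is the linear order on $S_2(A)$ given by: $X$ is above $Y$ iff $\mathrm{best}(L,X)$ is above $\mathrm{best}(L,Y)$ in $L$, or $\mathrm{best}(L,X)=\mathrm{best}(L,Y)$ and $\mathrm{worst}(L,X)$ is above $\mathrm{worst}(L,Y)$; $\alpha(L)|_R$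 is its restriction to $R$. Given a domain $D$ of linear orders over a finite set $R$, two elements $x,y\in R$ are connected in $D$ if there are orders in $D$ ranking $x$ first and $y$ second, and $y$ first and $x$ second, respectively. $D$ is linked if $R$ can be enumerated as $x_1,\dots,x_q$ such that $x_1$ is connected to $x_2$ and for every $j\ge 3$, $x_j$ is connected to at least two elements of $\{x_1,\dots,x_{j-1}\}$. *)

theory Defs
  imports Main
begin

text \<open>A linear order on A is a relation L with linear_order_on A L;
  (x,y) \<in> L means x is ranked weakly above y.  Profiles are extensional:
  voters outside V get the empty relation.\<close>

definition profiles :: "'v set \<Rightarrow> 'a set \<Rightarrow> ('v \<Rightarrow> 'a rel) set" where
  "profiles V A = {P. (\<forall>i\<in>V. linear_order_on A (P i)) \<and> (\<forall>i. i \<notin> V \<longrightarrow> P i = {})}"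

definition restrict_profile :: "('v \<Rightarrow> 'a rel) \<Rightarrow> 'a set \<Rightarrow> ('v \<Rightarrow> 'a rel)" where
  "restrict_profile P B = (\<lambda>i. P i \<inter> (B \<times> B))"

definition S2 :: "'a set \<Rightarrow> 'a set set" where
  "S2 A = {X. X \<subseteq> A \<and> card X = 2}"

definition best :: "'a rel \<Rightarrow> 'a set \<Rightarrow> 'a" where
  "best L W = (THE x. x \<in> W \<and> (\<forall>y\<in>W. (x, y) \<in> L))"

definition worst :: "'a rel \<Rightarrow> 'a set \<Rightarrow> 'a" where
  "worst L W = (THE x. x \<in> W \<and> (\<forall>y\<in>W. (y, x) \<in> L))"

definition consular_rule :: "'v set \<Rightarrow> 'a set \<Rightarrow> (('v \<Rightarrow> 'a rel) \<Rightarrow> 'a set) \<Rightarrow> bool" where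
  "consular_rule V A F \<longleftrightarrow> (\<forall>P\<in>profiles V A. F P \<in> S2 A)"

definition social_choice_function :: "'v set \<Rightarrow> 'a set \<Rightarrow> (('v \<Rightarrow> 'a rel) \<Rightarrow> 'a) \<Rightarrow> bool" where
  "social_choice_function V B G \<longleftrightarrow> (\<forall>P\<in>profiles V B. G P \<in> B)"

definition SPO :: "'v set \<Rightarrow> 'a set \<Rightarrow> (('v \<Rightarrow> 'a rel) \<Rightarrow> 'a set) \<Rightarrow> bool" where
  "SPO V A F \<longleftrightarrow> (\<forall>P\<in>profiles V A. \<forall>i\<in>V. \<forall>L'. linear_order_on A L' \<longrightarrow>
      (best (P i) (F P), best (P i) (F (P(i := L')))) \<in> P i)"

definition SPP :: "'v set \<Rightarrow> 'a set \<Rightarrow> (('v \<Rightarrow> 'a rel) \<Rightarrow> 'a set) \<Rightarrow> bool" where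
  "SPP V A F \<longleftrightarrow> (\<forall>P\<in>profiles V A. \<forall>i\<in>V. \<forall>L'. linear_order_on A L' \<longrightarrow>
      (worst (P i) (F P), worst (P i) (F (P(i := L')))) \<in> P i)"

definition weakly_viable :: "'v set \<Rightarrow> 'a set \<Rightarrow> (('v \<Rightarrow> 'a rel) \<Rightarrow> 'a set) \<Rightarrow> bool" where
  "weakly_viable V A F \<longleftrightarrow> (\<forall>a\<in>A. \<exists>P\<in>profiles V A. a \<in> F P)"

definition reducible :: "'v set \<Rightarrow> 'a set \<Rightarrow> (('v \<Rightarrow> 'a rel) \<Rightarrow> 'a set) \<Rightarrow> bool" where
  "reducible V A F \<longleftrightarrow> (\<exists>B C G H. B \<union> C = A \<and> B \<inter> C = {} \<and> B \<noteq> {} \<and> C \<noteq> {} \<and>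
      social_choice_function V B G \<and> social_choice_function V C H \<and>
      (\<forall>P\<in>profiles V A. F P = {G (restrict_profile P B), H (restrict_profile P C)}))"

definition irreducible :: "'v set \<Rightarrow> 'a set \<Rightarrow> (('v \<Rightarrow> 'a rel) \<Rightarrow> 'a set) \<Rightarrow> bool" where
  "irreducible V A F \<longleftrightarrow> \<not> reducible V A F"

definition alpha :: "'a set \<Rightarrow> 'a rel \<Rightarrow> 'a set rel" where
  "alpha A L = {(X, Y). X \<in> S2 A \<and> Y \<in> S2 A \<and>
      ((best L X \<noteq> best L Y \<and> (best L X, best L Y) \<in> L) \<or>
       (best L X = best L Y \<and> (worst L X, worst L Y) \<in> L))}"

definition ranks_first :: "'b set \<Rightarrow> 'b rel \<Rightarrow> 'b \<Rightarrow> bool" where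
  "ranks_first R M x \<longleftrightarrow> x \<in> R \<and> (\<forall>z\<in>R. (x, z) \<in> M)"

definition ranks_second :: "'b set \<Rightarrow> 'b rel \<Rightarrow> 'b \<Rightarrow> 'b \<Rightarrow> bool" where
  "ranks_second R M x y \<longleftrightarrow> ranks_first R M x \<and> y \<in> R \<and> y \<noteq> x \<and> (\<forall>z\<in>R - {x}. (y, z) \<in> M)"

definition connected_in :: "'b set \<Rightarrow> 'b rel set \<Rightarrow> 'b \<Rightarrow> 'b \<Rightarrow> bool" where
  "connected_in R D x y \<longleftrightarrow> (\<exists>M\<in>D. ranks_second R M x y) \<and> (\<exists>M\<in>D. ranks_second R M y x)"

definition linked :: "'b set \<Rightarrow> 'b rel set \<Rightarrow> bool" where
  "linked R D \<longleftrightarrow> (\<exists>xs. distinct xs \<and> set xs = R \<and>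
      (2 \<le> length xs \<longrightarrow> connected_in R D (xs ! 0) (xs ! 1)) \<and>
      (\<forall>j. 2 \<le> j \<and> j < length xs \<longrightarrow>
          2 \<le> card {k. k < j \<and> connected_in R D (xs ! j) (xs ! k)}))"

end

theory Submission imports Defs begin

lemma lin_facts:
  assumes "linear_order_on A L"
  shows "\<And>x. x \<in> A \<Longrightarrow> (x,x) \<in> L"
    "\<And>x y z. (x,y) \<in> L \<Longrightarrow> (y,z) \<in> L \<Longrightarrow> (x,z) \<in> L"
    "\<And>x y. (x,y) \<in> L \<Longrightarrow> (y,x) \<in> L \<Longrightarrow> x = y"
    "\<And>x y. x \<in> A \<Longrightarrow> y \<in> A \<Longrightarrow> x \<noteq> y \<Longrightarrow> (x,y) \<in> L \<or> (y,x) \<in> L"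
proof -
  have a: "refl_on A L" "trans L" "antisym L" "total_on A L" using assms
    unfolding linear_order_on_def partial_order_on_def preorder_on_def by auto
  show "\<And>x. x \<in> A \<Longrightarrow> (x,x) \<in> L" using a(1) by (simp add: refl_on_def)
  show "\<And>x y z. (x,y) \<in> L \<Longrightarrow> (y,z) \<in> L \<Longrightarrow> (x,z) \<in> L" using a(2) by (meson transD)
  show "\<And>x y. (x,y) \<in> L \<Longrightarrow> (y,x) \<in> L \<Longrightarrow> x = y" using a(3) by (meson antisymD)
  show "\<And>x y. x \<in> A \<Longrightarrow> y \<in> A \<Longrightarrow> x \<noteq> y \<Longrightarrow> (x,y) \<in> L \<or> (y,x) \<in> L"
    using a(4) by (simp add: total_on_def)
qed

lemma best2:
  assumes L: "linear_order_on A L" and uv: "u \<noteq> v" "(u,v) \<in> L" "u \<in> A" "v \<in> A"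
  shows "best L {u,v} = u" "worst L {u,v} = v"
proof -
  note f = lin_facts[OF L]
  have vu: "(v,u) \<notin> L" using f(3) uv by blast
  have ru: "(u,u) \<in> L" "(v,v) \<in> L" using f(1) uv by auto
  show "best L {u,v} = u" unfolding best_def
  proof (rule the_equality)
    show "u \<in> {u, v} \<and> (\<forall>y\<in>{u, v}. (u, y) \<in> L)" using ru uv by simp
    fix x assume "x \<in> {u, v} \<and> (\<forall>y\<in>{u, v}. (x, y) \<in> L)"
    thus "x = u" using vu by auto
  qed
  show "worst L {u,v} = v" unfolding worst_def
  proof (rule the_equality)
    show "v \<in> {u, v} \<and> (\<forall>y\<in>{u, v}. (y, v) \<in> L)" using ru uv by simp
    fix x assume "x \<in> {u, v} \<and> (\<forall>y\<in>{u, v}. (y, x) \<in> L)"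
    thus "x = v" using vu by auto
  qed
qed

lemma S2_elem:
  assumes "X \<in> S2 A" shows "\<exists>u v. X = {u,v} \<and> u \<noteq> v \<and> u \<in> A \<and> v \<in> A"
proof -
  have "X \<subseteq> A" "card X = 2" using assms unfolding S2_def by auto
  then obtain u v where "X = {u,v}" "u \<noteq> v" by (auto simp: card_2_iff)
  thus ?thesis using \<open>X \<subseteq> A\<close> by auto
qed

lemma S2_lin:
  assumes "linear_order_on A L" "X \<in> S2 A"
  shows "\<exists>u v. X = {u,v} \<and> u \<noteq> v \<and> u \<in> A \<and> v \<in> A \<and> (u,v) \<in> L \<and> best L X = u \<and> worst L X = v"
proof -
  obtain u v where X: "X = {u,v}" "u \<noteq> v" "u \<in> A" "v \<in> A" using S2_elem[OF assms(2)] by blast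
  note f = lin_facts[OF assms(1)]
  show ?thesis
  proof (cases "(u,v) \<in> L")
    case True thus ?thesis using X best2[OF assms(1), of u v] by blast
  next
    case False
    hence "(v,u) \<in> L" using f(4) X by blast
    hence "{v,u} = {v,u} \<and> v \<noteq> u \<and> v \<in> A \<and> u \<in> A \<and> (v,u) \<in> L \<and> best L {v,u} = v \<and> worst L {v,u} = u"
      using X best2[OF assms(1), of v u] by auto
    thus ?thesis using X by (metis insert_commute)
  qed
qed

lemma alpha_lin:
  assumes L: "linear_order_on A L" and R: "R \<subseteq> S2 A"
  shows "linear_order_on R (alpha A L \<inter> (R \<times> R))"
proof -
  note f = lin_facts[OF L]
  have bw: "\<And>X. X \<in> R \<Longrightarrow> \<exists>u v. X = {u,v} \<and> u \<noteq> v \<and> u \<in> A \<and> v \<in> A \<and> (u,v) \<in> L \<and> best L X = u \<and> worst L X = v"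
    using S2_lin[OF L] R by blast
  have refl: "refl_on R (alpha A L \<inter> (R \<times> R))"
  proof (unfold refl_on_def, intro ballI)
    fix X assume X: "X \<in> R"
    then obtain u v where "worst L X = v" "v \<in> A" using bw by blast
    hence "(worst L X, worst L X) \<in> L" using f(1) by simp
    thus "(X,X) \<in> alpha A L \<inter> (R \<times> R)" using X R unfolding alpha_def by auto
  qed
  have tr: "trans (alpha A L \<inter> (R \<times> R))"
  proof (unfold trans_def, intro allI impI)
    fix X Y Z assume a: "(X,Y) \<in> alpha A L \<inter> (R \<times> R)" "(Y,Z) \<in> alpha A L \<inter> (R \<times> R)"
    have h1: "(best L X \<noteq> best L Y \<and> (best L X, best L Y) \<in> L) \<or> (best L X = best L Y \<and> (worst L X, worst L Y) \<in> L)"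
      using a(1) unfolding alpha_def by blast
    have h2: "(best L Y \<noteq> best L Z \<and> (best L Y, best L Z) \<in> L) \<or> (best L Y = best L Z \<and> (worst L Y, worst L Z) \<in> L)"
      using a(2) unfolding alpha_def by blast
    have "(best L X \<noteq> best L Z \<and> (best L X, best L Z) \<in> L) \<or> (best L X = best L Z \<and> (worst L X, worst L Z) \<in> L)"
      using h1 h2 f(2)[of "best L X" "best L Y" "best L Z"] f(3)[of "best L X" "best L Y"]
        f(2)[of "worst L X" "worst L Y" "worst L Z"] by metis
    thus "(X,Z) \<in> alpha A L \<inter> (R \<times> R)" using a unfolding alpha_def by blast
  qed
  have an: "antisym (alpha A L \<inter> (R \<times> R))"
  proof (unfold antisym_def, intro allI impI)
    fix X Y assume a: "(X,Y) \<in> alpha A L \<inter> (R \<times> R)" "(Y,X) \<in> alpha A L \<inter> (R \<times> R)"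
    hence XY: "X \<in> R" "Y \<in> R" by auto
    obtain u v where X: "X = {u,v}" "best L X = u" "worst L X = v" using bw[OF XY(1)] by blast
    obtain u' v' where Y: "Y = {u',v'}" "best L Y = u'" "worst L Y = v'" using bw[OF XY(2)] by blast
    have h1: "(u \<noteq> u' \<and> (u,u') \<in> L) \<or> (u = u' \<and> (v,v') \<in> L)" using a(1) X Y unfolding alpha_def by auto
    have h2: "(u' \<noteq> u \<and> (u',u) \<in> L) \<or> (u' = u \<and> (v',v) \<in> L)" using a(2) X Y unfolding alpha_def by auto
    have "u = u'" using h1 h2 f(3)[of u u'] by blast
    moreover have "v = v'" using h1 h2 f(3)[of v v'] \<open>u = u'\<close> by blast
    ultimately show "X = Y" using X Y by simp
  qed
  have to: "total_on R (alpha A L \<inter> (R \<times> R))"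
  proof (unfold total_on_def, intro ballI impI)
    fix X Y assume XY: "X \<in> R" "Y \<in> R" "X \<noteq> Y"
    obtain u v where X: "X = {u,v}" "u \<in> A" "v \<in> A" "best L X = u" "worst L X = v" using bw[OF XY(1)] by blast
    obtain u' v' where Y: "Y = {u',v'}" "u' \<in> A" "v' \<in> A" "best L Y = u'" "worst L Y = v'" using bw[OF XY(2)] by blast
    have XYS: "X \<in> S2 A" "Y \<in> S2 A" using XY R by auto
    show "(X,Y) \<in> alpha A L \<inter> (R \<times> R) \<or> (Y,X) \<in> alpha A L \<inter> (R \<times> R)"
    proof (cases "u = u'")
      case True
      hence "v \<noteq> v'" using XY X Y by auto
      hence "(v,v') \<in> L \<or> (v',v) \<in> L" using f(4) X Y by blast
      thus ?thesis using True X Y XY XYS unfolding alpha_def by auto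
    next
      case False
      hence "(u,u') \<in> L \<or> (u',u) \<in> L" using f(4) X Y by blast
      thus ?thesis using False X Y XY XYS unfolding alpha_def by auto
    qed
  qed
  show ?thesis using refl tr an to
    unfolding linear_order_on_def partial_order_on_def preorder_on_def by blast
qed


definition rk :: "('a \<Rightarrow> nat) \<Rightarrow> 'a set \<Rightarrow> 'a rel" where
  "rk r A = {(x,y). x \<in> A \<and> y \<in> A \<and> r x \<le> r y}"

lemma rk_lin: "inj_on r A \<Longrightarrow> linear_order_on A (rk r A)"
  unfolding rk_def linear_order_on_def partial_order_on_def preorder_on_def refl_on_def trans_def
    antisym_def total_on_def
  by (auto simp: inj_on_def)

lemma mk_rank:
  assumes "finite A" "t \<noteq> a" "t \<noteq> b" "a \<noteq> b"
  shows "\<exists>r. inj_on r A \<and> r t = 0 \<and> r a = 1 \<and> r b = (2::nat)"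
proof -
  obtain f :: "'a \<Rightarrow> nat" and n where f: "inj_on f A"
    using finite_imp_inj_to_nat_seg[OF assms(1)] by blast
  define r where "r x = (if x = t then 0 else if x = a then 1 else if x = b then 2 else f x + 3)" for x
  have "inj_on r A" unfolding inj_on_def r_def using f assms by (auto simp: inj_on_def)
  moreover have "r t = 0 \<and> r a = 1 \<and> r b = (2::nat)" unfolding r_def using assms by auto
  ultimately show ?thesis by blast
qed

lemma ex_lin: assumes "finite A" shows "\<exists>L. linear_order_on A L"
proof -
  obtain f :: "'a \<Rightarrow> nat" and n where f: "inj_on f A"
    using finite_imp_inj_to_nat_seg[OF assms(1)] by blast
  show ?thesis using rk_lin[OF f] by blast
qed

lemma rk_mem: "(x,y) \<in> rk r A \<longleftrightarrow> x \<in> A \<and> y \<in> A \<and> r x \<le> r y"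
  unfolding rk_def by auto

lemma S2_two: "{x,y} \<in> S2 A \<Longrightarrow> x \<noteq> y \<and> x \<in> A \<and> y \<in> A"
  unfolding S2_def by (cases "x = y") auto

lemma S2_other: assumes "X \<in> S2 A" "p \<in> X" shows "\<exists>q. X = {p,q} \<and> p \<noteq> q \<and> q \<in> A"
proof -
  obtain u v where X: "X = {u,v}" "u \<noteq> v" "u \<in> A" "v \<in> A" using S2_elem[OF assms(1)] by blast
  show ?thesis using X assms(2) by (metis insert_commute insert_iff singletonD)
qed

definition domn :: "'a rel \<Rightarrow> 'a set \<Rightarrow> 'a set set \<Rightarrow> bool" where
  "domn L X Op \<longleftrightarrow> (\<forall>Y\<in>Op. (best L X, best L Y) \<in> L \<and> (worst L X, worst L Y) \<in> L)"

lemma Dprop: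
  assumes fin: "finite A" and Op: "Op \<subseteq> S2 A"
    and ex: "\<And>L. linear_order_on A L \<Longrightarrow> \<exists>X\<in>Op. domn L X Op"
    and e: "{y1,y2} \<in> Op" and Z: "Z \<in> Op" "t \<in> Z" and t: "t \<notin> {y1,y2}"
  shows "{t,y1} \<in> Op \<or> {t,y2} \<in> Op"
proof -
  have s2: "{y1,y2} \<in> S2 A" using e Op by blast
  have y: "y1 \<noteq> y2" "y1 \<in> A" "y2 \<in> A" using S2_two[OF s2] by auto
  have "Z \<in> S2 A" using Z Op by blast
  hence "Z \<subseteq> A" by (simp add: S2_def)
  hence tA: "t \<in> A" using Z(2) by blast
  obtain r where r: "inj_on r A" "r t = 0" "r y1 = 1" "r y2 = (2::nat)"
    using mk_rank[OF fin, of t y1 y2] t y by auto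
  have inj: "\<And>x y. x \<in> A \<Longrightarrow> y \<in> A \<Longrightarrow> r x = r y \<Longrightarrow> x = y" using r(1) by (simp add: inj_on_def)
  define L where "L = rk r A"
  have L: "linear_order_on A L" unfolding L_def using rk_lin[OF r(1)] .
  have Lm: "\<And>x y. (x,y) \<in> L \<longleftrightarrow> x \<in> A \<and> y \<in> A \<and> r x \<le> r y" unfolding L_def rk_mem by simp
  obtain X where X: "X \<in> Op" "domn L X Op" using ex[OF L] by blast
  obtain u v where Zuv: "Z = {u,v}" "u \<noteq> v" "u \<in> A" "v \<in> A" "(u,v) \<in> L" "best L Z = u"
    using S2_lin[OF L, of Z] Z Op by blast
  have "t = u \<or> t = v" using Zuv(1) Z(2) by simp
  hence "r u \<le> r t" using Zuv(5) Lm by auto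
  obtain p q where Xpq: "X = {p,q}" "p \<noteq> q" "p \<in> A" "q \<in> A" "(p,q) \<in> L" "best L X = p" "worst L X = q"
    using S2_lin[OF L, of X] X Op by blast
  have "(best L X, best L Z) \<in> L" using X(2) Z(1) unfolding domn_def by blast
  hence "(p,u) \<in> L" using Xpq(6) Zuv(6) by simp
  hence "r p = 0" using \<open>r u \<le> r t\<close> r(2) Lm by auto
  hence pt: "p = t" using inj[OF Xpq(3) tA] r(2) by simp
  have "(y1,y2) \<in> L" using Lm y r by simp
  hence wy: "worst L {y1,y2} = y2" using best2[OF L, of y1 y2] y by blast
  have "(worst L X, worst L {y1,y2}) \<in> L" using X(2) e unfolding domn_def by blast
  hence "(q,y2) \<in> L" using Xpq(7) wy by simp
  hence "r q \<le> 2" using r Lm by auto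
  moreover have "r q \<noteq> 0" using pt Xpq(2) inj[OF Xpq(4) tA] r(2) by auto
  ultimately have "r q = r y1 \<or> r q = r y2" using r by auto
  hence "q = y1 \<or> q = y2" using inj Xpq(4) y by blast
  thus ?thesis using X(1) Xpq(1) pt by auto
qed

lemma adj_second:
  assumes fin: "finite A" and R: "R \<subseteq> S2 A" and X: "{p,q} \<in> R" and Y: "{p,s} \<in> R"
    and d: "q \<noteq> s"
  shows "\<exists>M\<in>{alpha A L \<inter> (R \<times> R) | L. linear_order_on A L}. ranks_second R M {p,q} {p,s}"
proof -
  have X2: "{p,q} \<in> S2 A" using X R by blast
  have Y2: "{p,s} \<in> S2 A" using Y R by blast
  have pq: "p \<noteq> q" "p \<in> A" "q \<in> A" using S2_two[OF X2] by auto
  have ps: "p \<noteq> s" "s \<in> A" using S2_two[OF Y2] by auto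
  obtain r where r: "inj_on r A" "r p = 0" "r q = 1" "r s = (2::nat)"
    using mk_rank[OF fin, of p q s] pq ps d by auto
  define L where "L = rk r A"
  have L: "linear_order_on A L" unfolding L_def using rk_lin[OF r(1)] .
  have bX: "best L {p,q} = p" "worst L {p,q} = q" using best2[OF L, of p q] pq r unfolding L_def rk_mem by auto
  have bY: "best L {p,s} = p" "worst L {p,s} = s" using best2[OF L, of p s] pq ps r unfolding L_def rk_mem by auto
  define M where "M = alpha A L \<inter> (R \<times> R)"
  have first: "ranks_first R M {p,q}"
    unfolding ranks_first_def
  proof (intro conjI ballI)
    show "{p,q} \<in> R" by fact
    fix Z assume Z: "Z \<in> R"
    obtain u v where Zuv: "Z = {u,v}" "u \<noteq> v" "u \<in> A" "v \<in> A" "(u,v) \<in> L" "best L Z = u" "worst L Z = v"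
      using S2_lin[OF L, of Z] Z R by blast
    have Z2: "Z \<in> S2 A" "{p,q} \<in> S2 A" using Z X R by auto
    have "u = p \<Longrightarrow> r v \<noteq> 0" using r(1,2) Zuv pq by (metis inj_onD)
    hence c: "u = p \<Longrightarrow> (q, v) \<in> L" using r(3) Zuv pq unfolding L_def rk_mem by auto
    have c2: "(p,u) \<in> L" using r(2) Zuv pq unfolding L_def rk_mem by auto
    have "(best L {p,q} \<noteq> best L Z \<and> (best L {p,q}, best L Z) \<in> L) \<or>
       (best L {p,q} = best L Z \<and> (worst L {p,q}, worst L Z) \<in> L)"
      using c c2 bX Zuv(6,7) by auto
    thus "({p,q}, Z) \<in> M" unfolding M_def alpha_def using X Z Z2 by auto
  qed
  have second: "ranks_second R M {p,q} {p,s}"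
    unfolding ranks_second_def
  proof (intro conjI ballI)
    show "ranks_first R M {p,q}" by fact
    show "{p,s} \<in> R" by fact
    show "{p,s} \<noteq> {p,q}" using d pq ps by (auto simp: doubleton_eq_iff)
    fix Z assume Z: "Z \<in> R - {{p,q}}"
    obtain u v where Zuv: "Z = {u,v}" "u \<noteq> v" "u \<in> A" "v \<in> A" "(u,v) \<in> L" "best L Z = u" "worst L Z = v"
      using S2_lin[OF L, of Z] Z R by blast
    have Z2: "Z \<in> S2 A" "{p,s} \<in> S2 A" using Z Y R by auto
    have "u = p \<Longrightarrow> v \<noteq> p \<and> v \<noteq> q" using Zuv Z by auto
    hence "u = p \<Longrightarrow> r v \<noteq> 0 \<and> r v \<noteq> 1" using r Zuv pq by (metis inj_onD)
    hence c: "u = p \<Longrightarrow> (s, v) \<in> L" using r(4) Zuv ps unfolding L_def rk_mem by auto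
    have c2: "(p,u) \<in> L" using r(2) Zuv pq unfolding L_def rk_mem by auto
    have "(best L {p,s} \<noteq> best L Z \<and> (best L {p,s}, best L Z) \<in> L) \<or>
       (best L {p,s} = best L Z \<and> (worst L {p,s}, worst L Z) \<in> L)"
      using c c2 bY Zuv(6,7) by auto
    thus "({p,s}, Z) \<in> M" unfolding M_def alpha_def using Y Z Z2 by auto
  qed
  show ?thesis using second L unfolding M_def by blast
qed

lemma adj_conn:
  assumes fin: "finite A" and R: "R \<subseteq> S2 A" and X: "X \<in> R" and Y: "Y \<in> R"
    and ne: "X \<noteq> Y" and p: "p \<in> X" "p \<in> Y"
  shows "connected_in R {alpha A L \<inter> (R \<times> R) | L. linear_order_on A L} X Y"
proof -
  have X2: "X \<in> S2 A" using X R by blast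
  have Y2: "Y \<in> S2 A" using Y R by blast
  obtain q where q: "X = {p,q}" using S2_other[OF X2 p(1)] by blast
  obtain s where s: "Y = {p,s}" using S2_other[OF Y2 p(2)] by blast
  have "q \<noteq> s" using ne q s by auto
  have 1: "\<exists>M\<in>{alpha A L \<inter> (R \<times> R) | L. linear_order_on A L}. ranks_second R M X Y"
    using adj_second[OF fin R, of p q s] X Y q s \<open>q \<noteq> s\<close> by simp
  have 2: "\<exists>M\<in>{alpha A L \<inter> (R \<times> R) | L. linear_order_on A L}. ranks_second R M Y X"
    using adj_second[OF fin R, of p s q] X Y q s \<open>q \<noteq> s\<close> by simp
  show ?thesis unfolding connected_in_def using 1 2 by blast
qed


lemma prof_upd:
  assumes "P \<in> profiles V A" "i \<in> V" "linear_order_on A L"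
  shows "P(i := L) \<in> profiles V A"
  using assms unfolding profiles_def by auto

lemma F_S2:
  assumes "consular_rule V A F" "P \<in> profiles V A" shows "F P \<in> S2 A"
  using assms unfolding consular_rule_def by blast

lemma best_in:
  assumes "linear_order_on A L" "X \<in> S2 A" shows "best L X \<in> A" "worst L X \<in> A"
  using S2_lin[OF assms] by auto

lemma unan_dom:
  assumes fV: "finite V" and cons: "consular_rule V A F" and spo: "SPO V A F" and spp: "SPP V A F"
    and L: "linear_order_on A L" and P': "P' \<in> profiles V A"
  shows "(best L (F (\<lambda>i. if i \<in> V then L else {})), best L (F P')) \<in> L \<and>
         (worst L (F (\<lambda>i. if i \<in> V then L else {})), worst L (F P')) \<in> L"
proof -
  note f = lin_facts[OF L]
  define Q where "Q W = (\<lambda>i. if i \<in> W then L else P' i)" for W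
  have Qp: "W \<subseteq> V \<Longrightarrow> Q W \<in> profiles V A" for W
    using P' L unfolding Q_def profiles_def by auto
  have main: "W \<subseteq> V \<Longrightarrow> (best L (F (Q W)), best L (F P')) \<in> L \<and> (worst L (F (Q W)), worst L (F P')) \<in> L" for W
  proof -
    assume W: "W \<subseteq> V"
    hence "finite W" using fV finite_subset by blast
    thus ?thesis using W
    proof (induction W rule: finite_induct)
      case empty
      have "Q {} = P'" unfolding Q_def by auto
      moreover have "F P' \<in> S2 A" using F_S2[OF cons P'] .
      ultimately show ?case using best_in[OF L] f(1) by simp
    next
      case (insert x W)
      have xV: "x \<in> V" and WV: "W \<subseteq> V" using insert.prems by auto
      have IH: "(best L (F (Q W)), best L (F P')) \<in> L \<and> (worst L (F (Q W)), worst L (F P')) \<in> L"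
        using insert.IH WV .
      have Qi: "Q (insert x W) \<in> profiles V A" using Qp insert.prems .
      have lin': "linear_order_on A (P' x)" using P' xV unfolding profiles_def by auto
      have e1: "Q (insert x W) x = L" unfolding Q_def by simp
      have e2: "(Q (insert x W))(x := P' x) = Q W" unfolding Q_def using insert.hyps(2) by (auto simp: fun_eq_iff)
      have s1: "(best L (F (Q (insert x W))), best L (F (Q W))) \<in> L"
        using spo Qi xV lin' e1 e2 unfolding SPO_def by metis
      have s2: "(worst L (F (Q (insert x W))), worst L (F (Q W))) \<in> L"
        using spp Qi xV lin' e1 e2 unfolding SPP_def by metis
      show ?case using s1 s2 IH f(2) by blast
    qed
  qed
  have "Q V = (\<lambda>i. if i \<in> V then L else {})" using P' unfolding Q_def profiles_def by (auto simp: fun_eq_iff)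
  thus ?thesis using main[of V] by simp
qed

lemma opt_dom:
  assumes spo: "SPO V A F" and spp: "SPP V A F" and P: "P \<in> profiles V A" and i: "i \<in> V"
    and L: "linear_order_on A L" and L': "linear_order_on A L'"
  shows "(best L (F (P(i := L))), best L (F (P(i := L')))) \<in> L \<and>
         (worst L (F (P(i := L))), worst L (F (P(i := L')))) \<in> L"
proof -
  have Pi: "P(i := L) \<in> profiles V A" using prof_upd[OF P i L] .
  have e: "(P(i := L))(i := L') = P(i := L')" by simp
  have e1: "(P(i := L)) i = L" by simp
  show ?thesis using spo spp Pi i L' e e1 unfolding SPO_def SPP_def by metis
qed

lemma swap:
  assumes L: "linear_order_on A L" and d: "b \<noteq> b'" "b \<noteq> c" "b' \<noteq> c"
    and A: "b \<in> A" "b' \<in> A" "c \<in> A"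
    and h1: "(best L {b,c}, best L {b',c}) \<in> L" and h2: "(worst L {b,c}, worst L {b',c}) \<in> L"
  shows "(b,b') \<in> L"
proof -
  note f = lin_facts[OF L]
  have t1: "(b,c) \<in> L \<or> (c,b) \<in> L" using f(4) d A by blast
  have t2: "(b',c) \<in> L \<or> (c,b') \<in> L" using f(4) d A by blast
  show ?thesis
  proof (cases "(b,c) \<in> L")
    case bc: True
    hence e1: "best L {b,c} = b" "worst L {b,c} = c" using best2[OF L, of b c] d A by auto
    show ?thesis
    proof (cases "(b',c) \<in> L")
      case True
      hence "best L {b',c} = b'" using best2[OF L, of b' c] d A by auto
      thus ?thesis using h1 e1 by simp
    next
      case False
      hence "(c,b') \<in> L" using t2 by blast
      thus ?thesis using bc f(2) by blast
    qed
  next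
    case cb: False
    hence cb: "(c,b) \<in> L" using t1 by blast
    have "{b,c} = {c,b}" by auto
    hence e1: "best L {b,c} = c" "worst L {b,c} = b" using best2[OF L, of c b] cb d A by auto
    show ?thesis
    proof (cases "(b',c) \<in> L")
      case True
      hence "best L {b',c} = b'" using best2[OF L, of b' c] d A by auto
      hence "(c,b') \<in> L" using h1 e1 by simp
      hence "c = b'" using True f(3) by blast
      thus ?thesis using d by simp
    next
      case False
      hence cb': "(c,b') \<in> L" using t2 by blast
      have "{b',c} = {c,b'}" by auto
      hence "worst L {b',c} = b'" using best2[OF L, of c b'] cb' d A by auto
      thus ?thesis using h2 e1 by simp
    qed
  qed
qed

definition sel :: "'a set \<Rightarrow> 'a set \<Rightarrow> 'a" where
  "sel B X = (THE b. b \<in> X \<and> b \<in> B)"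

lemma sel_eq: "b \<in> B \<Longrightarrow> c \<notin> B \<Longrightarrow> sel B {b,c} = b"
  unfolding sel_def by (rule the_equality) auto


definition crossing :: "'a set \<Rightarrow> 'a set \<Rightarrow> 'a set set \<Rightarrow> bool" where
  "crossing B C R \<longleftrightarrow> (\<forall>X\<in>R. \<exists>b c. X = {b,c} \<and> b \<in> B \<and> c \<in> C)"

lemma crossing_sym: "crossing B C R \<Longrightarrow> crossing C B R"
  unfolding crossing_def by (metis insert_commute)

lemma dom_opt:
  assumes spo: "SPO V A F" and spp: "SPP V A F" and P: "P \<in> profiles V A" and i: "i \<in> V"
    and L: "linear_order_on A L"
  shows "domn L (F (P(i := L))) {F (P(i := L)) | L. linear_order_on A L}"
  unfolding domn_def
proof (intro ballI)
  fix Y assume "Y \<in> {F (P(i := L)) | L. linear_order_on A L}"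
  then obtain L' where Y: "Y = F (P(i := L'))" "linear_order_on A L'" by blast
  show "(best L (F (P(i := L))), best L Y) \<in> L \<and> (worst L (F (P(i := L))), worst L Y) \<in> L"
    using opt_dom[OF spo spp P i L Y(2)] Y(1) by simp
qed

lemma single_voter:
  assumes fin: "finite A" and cons: "consular_rule V A F" and spo: "SPO V A F" and spp: "SPP V A F"
    and BC: "B \<union> C = A" "B \<inter> C = {}" and cr: "crossing B C (F ` profiles V A)"
    and P: "P \<in> profiles V A" and i: "i \<in> V"
    and L1: "linear_order_on A L1" and L2: "linear_order_on A L2"
    and eq: "L1 \<inter> (B \<times> B) = L2 \<inter> (B \<times> B)"
  shows "sel B (F (P(i := L1))) = sel B (F (P(i := L2)))"
proof -
  define Op where "Op = {F (P(i := L)) | L. linear_order_on A L}"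
  have OpR: "Op \<subseteq> F ` profiles V A"
  proof
    fix Y assume "Y \<in> Op"
    then obtain L where "Y = F (P(i := L))" "linear_order_on A L" unfolding Op_def by blast
    thus "Y \<in> F ` profiles V A" using prof_upd[OF P i] by blast
  qed
  have OpS: "Op \<subseteq> S2 A" using OpR F_S2[OF cons] by auto
  have crO: "crossing B C Op" using cr OpR unfolding crossing_def by (meson subsetD)
  have ex: "\<exists>X\<in>Op. domn L X Op" if L: "linear_order_on A L" for L
  proof -
    have "F (P(i := L)) \<in> Op" unfolding Op_def using L by blast
    moreover have "domn L (F (P(i := L))) Op"
      unfolding Op_def using dom_opt[OF spo spp P i L] .
    ultimately show ?thesis by blast
  qed
  have X1O: "F (P(i := L1)) \<in> Op" unfolding Op_def using L1 by blast
  have X2O: "F (P(i := L2)) \<in> Op" unfolding Op_def using L2 by blast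
  obtain b1 c1 where X1: "F (P(i := L1)) = {b1,c1}" "b1 \<in> B" "c1 \<in> C"
    using crO X1O unfolding crossing_def by blast
  obtain b2 c2 where X2: "F (P(i := L2)) = {b2,c2}" "b2 \<in> B" "c2 \<in> C"
    using crO X2O unfolding crossing_def by blast
  have c1B: "c1 \<notin> B" "c2 \<notin> B" using X1 X2 BC by auto
  have inA: "b1 \<in> A" "b2 \<in> A" "c1 \<in> A" "c2 \<in> A" using X1 X2 BC by auto
  have noBB: "{x,y} \<notin> Op" if "x \<in> B" "y \<in> B" for x y
  proof
    assume "{x,y} \<in> Op"
    then obtain b c where "{x,y} = {b,c}" "b \<in> B" "c \<in> C" using crO unfolding crossing_def by blast
    hence "c \<in> B" using that by (auto simp: doubleton_eq_iff)
    thus False using \<open>c \<in> C\<close> BC by auto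
  qed
  show ?thesis
  proof (rule ccontr)
    assume ne: "sel B (F (P(i := L1))) \<noteq> sel B (F (P(i := L2)))"
    hence bb: "b1 \<noteq> b2" using X1 X2 sel_eq c1B by metis
    have t1: "b2 \<notin> {b1,c1}" using bb c1B X2 by auto
    have "{b2,b1} \<in> Op \<or> {b2,c1} \<in> Op"
      using Dprop[OF fin OpS ex, of b1 c1 "F (P(i := L2))" b2] X1 X1O X2O X2 t1 by auto
    hence e1: "{b2,c1} \<in> Op" using noBB X1 X2 by blast
    have t2: "b1 \<notin> {b2,c2}" using bb c1B X1 by auto
    have "{b1,b2} \<in> Op \<or> {b1,c2} \<in> Op"
      using Dprop[OF fin OpS ex, of b2 c2 "F (P(i := L1))" b1] X2 X1O X2O X1 t2 by auto
    hence e2: "{b1,c2} \<in> Op" using noBB X1 X2 by blast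
    have d1: "domn L1 (F (P(i := L1))) Op" unfolding Op_def using dom_opt[OF spo spp P i L1] .
    have d2: "domn L2 (F (P(i := L2))) Op" unfolding Op_def using dom_opt[OF spo spp P i L2] .
    have "(best L1 {b1,c1}, best L1 {b2,c1}) \<in> L1" "(worst L1 {b1,c1}, worst L1 {b2,c1}) \<in> L1"
      using d1 e1 X1 unfolding domn_def by auto
    hence r1: "(b1,b2) \<in> L1" using swap[OF L1, of b1 b2 c1] bb c1B X1 X2 inA by auto
    have "(best L2 {b2,c2}, best L2 {b1,c2}) \<in> L2" "(worst L2 {b2,c2}, worst L2 {b1,c2}) \<in> L2"
      using d2 e2 X2 unfolding domn_def by auto
    hence "(b2,b1) \<in> L2" using swap[OF L2, of b2 b1 c2] bb c1B X1 X2 inA by auto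
    hence "(b2,b1) \<in> L1" using eq X1 X2 by blast
    thus False using r1 lin_facts(3)[OF L1] bb by blast
  qed
qed

lemma indep:
  assumes fV: "finite V" and fin: "finite A" and cons: "consular_rule V A F" and spo: "SPO V A F" and spp: "SPP V A F"
    and BC: "B \<union> C = A" "B \<inter> C = {}" and cr: "crossing B C (F ` profiles V A)"
    and P: "P \<in> profiles V A" and P': "P' \<in> profiles V A"
    and eq: "restrict_profile P B = restrict_profile P' B"
  shows "sel B (F P) = sel B (F P')"
proof -
  define Q where "Q W = (\<lambda>i. if i \<in> W then P' i else P i)" for W
  have Qp: "W \<subseteq> V \<Longrightarrow> Q W \<in> profiles V A" for W
    using P P' unfolding Q_def profiles_def by auto
  have main: "W \<subseteq> V \<Longrightarrow> sel B (F (Q W)) = sel B (F P)" for W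
  proof -
    assume W: "W \<subseteq> V"
    hence "finite W" using fV finite_subset by blast
    thus ?thesis using W
    proof (induction W rule: finite_induct)
      case empty
      have "Q {} = P" unfolding Q_def by auto
      thus ?case by simp
    next
      case (insert x W)
      have xV: "x \<in> V" and WV: "W \<subseteq> V" using insert.prems by auto
      have QW: "Q W \<in> profiles V A" using Qp WV .
      have l1: "linear_order_on A (P x)" using P xV unfolding profiles_def by auto
      have l2: "linear_order_on A (P' x)" using P' xV unfolding profiles_def by auto
      have e: "P x \<inter> (B \<times> B) = P' x \<inter> (B \<times> B)" using eq unfolding restrict_profile_def by (metis)
      have e1: "(Q W)(x := P x) = Q W" unfolding Q_def using insert.hyps(2) by (auto simp: fun_eq_iff)
      have e2: "(Q W)(x := P' x) = Q (insert x W)" unfolding Q_def by (auto simp: fun_eq_iff)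
      have "sel B (F ((Q W)(x := P x))) = sel B (F ((Q W)(x := P' x)))"
        using single_voter[OF fin cons spo spp BC cr QW xV l1 l2 e] .
      thus ?case using e1 e2 insert.IH WV by simp
    qed
  qed
  have "Q V = P'" using P P' unfolding Q_def profiles_def by (auto simp: fun_eq_iff)
  thus ?thesis using main[of V] by simp
qed

lemma reduc:
  assumes fV: "finite V" and fin: "finite A" and cons: "consular_rule V A F" and spo: "SPO V A F" and spp: "SPP V A F"
    and BC: "B \<union> C = A" "B \<inter> C = {}" "B \<noteq> {}" "C \<noteq> {}" and cr: "crossing B C (F ` profiles V A)"
  shows "reducible V A F"
proof -
  have cr': "crossing C B (F ` profiles V A)" using crossing_sym[OF cr] .
  have BC': "C \<union> B = A" "C \<inter> B = {}" using BC by auto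
  define G where "G Q = (if \<exists>P\<in>profiles V A. restrict_profile P B = Q
      then sel B (F (SOME P. P \<in> profiles V A \<and> restrict_profile P B = Q)) else (SOME b. b \<in> B))" for Q
  define H where "H Q = (if \<exists>P\<in>profiles V A. restrict_profile P C = Q
      then sel C (F (SOME P. P \<in> profiles V A \<and> restrict_profile P C = Q)) else (SOME c. c \<in> C))" for Q
  have selB: "sel B (F P) \<in> B" "sel C (F P) \<in> C" "F P = {sel B (F P), sel C (F P)}" if P: "P \<in> profiles V A" for P
  proof -
    obtain b c where "F P = {b,c}" "b \<in> B" "c \<in> C" using cr P unfolding crossing_def by blast
    moreover have "c \<notin> B" "b \<notin> C" using calculation BC by auto
    moreover have "{b,c} = {c,b}" by auto
    ultimately show "sel B (F P) \<in> B" "sel C (F P) \<in> C" "F P = {sel B (F P), sel C (F P)}"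
      using sel_eq by metis+
  qed
  have Gr: "G (restrict_profile P B) = sel B (F P)" if P: "P \<in> profiles V A" for P
  proof -
    define P0 where "P0 = (SOME P'. P' \<in> profiles V A \<and> restrict_profile P' B = restrict_profile P B)"
    have "P0 \<in> profiles V A \<and> restrict_profile P0 B = restrict_profile P B"
      unfolding P0_def by (rule someI[of _ P]) (use P in simp)
    hence "sel B (F P0) = sel B (F P)"
      using indep[OF fV fin cons spo spp BC(1,2) cr, of P0 P] P by simp
    thus ?thesis unfolding G_def P0_def using P by auto
  qed
  have Hr: "H (restrict_profile P C) = sel C (F P)" if P: "P \<in> profiles V A" for P
  proof -
    define P0 where "P0 = (SOME P'. P' \<in> profiles V A \<and> restrict_profile P' C = restrict_profile P C)"
    have "P0 \<in> profiles V A \<and> restrict_profile P0 C = restrict_profile P C"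
      unfolding P0_def by (rule someI[of _ P]) (use P in simp)
    hence "sel C (F P0) = sel C (F P)"
      using indep[OF fV fin cons spo spp BC'(1,2) cr', of P0 P] P by simp
    thus ?thesis unfolding H_def P0_def using P by auto
  qed
  have sG: "social_choice_function V B G"
    unfolding social_choice_function_def
  proof
    fix Q assume "Q \<in> profiles V B"
    show "G Q \<in> B"
    proof (cases "\<exists>P\<in>profiles V A. restrict_profile P B = Q")
      case True
      then obtain P where P: "P \<in> profiles V A" "restrict_profile P B = Q" by blast
      thus ?thesis using Gr[OF P(1)] selB[OF P(1)] by simp
    next
      case False
      thus ?thesis unfolding G_def using BC(3) by (simp add: some_in_eq)
    qed
  qed
  have sH: "social_choice_function V C H"
    unfolding social_choice_function_def
  proof
    fix Q assume "Q \<in> profiles V C"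
    show "H Q \<in> C"
    proof (cases "\<exists>P\<in>profiles V A. restrict_profile P C = Q")
      case True
      then obtain P where P: "P \<in> profiles V A" "restrict_profile P C = Q" by blast
      thus ?thesis using Hr[OF P(1)] selB[OF P(1)] by simp
    next
      case False
      thus ?thesis unfolding H_def using BC(4) by (simp add: some_in_eq)
    qed
  qed
  have "\<forall>P\<in>profiles V A. F P = {G (restrict_profile P B), H (restrict_profile P C)}"
    using Gr Hr selB by simp
  thus ?thesis unfolding reducible_def using BC sG sH by blast
qed


lemma two_idx:
  assumes x: "x \<in> set (take j xs)" and y: "y \<in> set (take j xs)" and xy: "x \<noteq> y"
    and cx: "Pc x" and cy: "Pc y"
  shows "2 \<le> card {k. k < j \<and> Pc (xs ! k)}"
proof -
  obtain k1 where k1: "k1 < length (take j xs)" "take j xs ! k1 = x" using x by (auto simp: in_set_conv_nth)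
  obtain k2 where k2: "k2 < length (take j xs)" "take j xs ! k2 = y" using y by (auto simp: in_set_conv_nth)
  have k1': "k1 < j" "xs ! k1 = x" using k1 by auto
  have k2': "k2 < j" "xs ! k2 = y" using k2 by auto
  have "k1 \<noteq> k2" using k1' k2' xy by auto
  have sub: "{k1,k2} \<subseteq> {k. k < j \<and> Pc (xs ! k)}" using k1' k2' cx cy by auto
  have fin: "finite {k. k < j \<and> Pc (xs ! k)}" by (rule finite_subset[of _ "{..<j}"]) auto
  have "card {k1,k2} = 2" using \<open>k1 \<noteq> k2\<close> by simp
  thus ?thesis using card_mono[OF fin sub] by simp
qed

lemma S2_fin: "finite A \<Longrightarrow> finite (S2 A)"
  by (rule finite_subset[of _ "Pow A"]) (auto simp: S2_def)

lemma linked_tri: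
  assumes fin: "finite A" and R: "R \<subseteq> S2 A"
    and DR: "\<And>y1 y2 t. {y1,y2} \<in> R \<Longrightarrow> t \<in> A \<Longrightarrow> t \<notin> {y1,y2} \<Longrightarrow> {t,y1} \<in> R \<or> {t,y2} \<in> R"
    and tri: "a \<noteq> b" "b \<noteq> c" "a \<noteq> c" "{a,b} \<in> R" "{b,c} \<in> R" "{a,c} \<in> R"
  shows "linked R {alpha A L \<inter> (R \<times> R) | L. linear_order_on A L}"
proof -
  define D where "D = {alpha A L \<inter> (R \<times> R) | L. linear_order_on A L}"
  define T where "T = {a,b,c}"
  define E0 where "E0 = [{a,b},{b,c},{a,c}]"
  define E1 where "E1 = {e\<in>R. e \<inter> T \<noteq> {}} - set E0"
  define E2 where "E2 = {e\<in>R. e \<inter> T = {}}"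
  have finR: "finite R" using finite_subset[OF R S2_fin[OF fin]] .
  obtain l1 where l1: "distinct l1" "set l1 = E1" using finite_distinct_list[of E1] finR unfolding E1_def by auto
  obtain l2 where l2: "distinct l2" "set l2 = E2" using finite_distinct_list[of E2] finR unfolding E2_def by auto
  define xs where "xs = E0 @ l1 @ l2"
  have E0R: "set E0 \<subseteq> R" using tri unfolding E0_def by auto
  have dE0: "distinct E0" using tri unfolding E0_def by (auto simp: doubleton_eq_iff)
  have E0T: "\<forall>e\<in>set E0. e \<subseteq> T" unfolding E0_def T_def by auto
  have E0ne: "\<forall>e\<in>set E0. e \<inter> T \<noteq> {}" unfolding E0_def T_def by auto
  have dxs: "distinct xs" unfolding xs_def using dE0 l1 l2 E0ne unfolding E1_def E2_def by auto
  have sxs: "set xs = R" unfolding xs_def using l1 l2 E0R unfolding E1_def E2_def by auto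
  have lE0: "length E0 = 3" unfolding E0_def by simp
  have len: "length xs = 3 + length l1 + length l2" unfolding xs_def E0_def by simp
  have cn: "connected_in R D X Y" if "X \<in> R" "Y \<in> R" "X \<noteq> Y" "p \<in> X" "p \<in> Y" for X Y p
    unfolding D_def using adj_conn[OF fin R that] .
  have first: "connected_in R D (xs ! 0) (xs ! 1)"
    using cn[of "{a,b}" "{b,c}" b] tri unfolding xs_def E0_def by (auto simp: doubleton_eq_iff)
  have tk0: "set E0 \<subseteq> set (take j xs)" if "3 \<le> j" for j
  proof -
    have "j = 3 + (j - 3)" using that by simp
    hence "take j xs = take 3 xs @ take (j - 3) (drop 3 xs)" by (metis take_add)
    moreover have "take 3 xs = E0" unfolding xs_def E0_def by simp
    ultimately show ?thesis by simp
  qed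
  have tk1: "set l1 \<subseteq> set (take j xs)" if "3 + length l1 \<le> j" for j
  proof -
    have "j = length (E0 @ l1) + (j - length (E0 @ l1))" using that unfolding E0_def by simp
    hence "take j xs = take (length (E0 @ l1)) xs @ take (j - length (E0 @ l1)) (drop (length (E0 @ l1)) xs)"
      by (metis take_add)
    moreover have "take (length (E0 @ l1)) xs = E0 @ l1" unfolding xs_def by simp
    ultimately have "take j xs = E0 @ l1 @ take (j - length (E0 @ l1)) (drop (length (E0 @ l1)) xs)" by simp
    thus ?thesis by auto
  qed
  have rest: "2 \<le> card {k. k < j \<and> connected_in R D (xs ! j) (xs ! k)}"
    if j: "2 \<le> j" "j < length xs" for j
  proof -
    have eR: "xs ! j \<in> R" using j sxs by auto
    consider (z) "j = 2" | (o) "3 \<le> j" "j < 3 + length l1" | (t) "3 + length l1 \<le> j" using j by linarith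
    thus ?thesis
    proof cases
      case z
      have e: "xs ! j = {a,c}" "take j xs = [{a,b},{b,c}]" unfolding xs_def E0_def z by auto
      have c1: "connected_in R D (xs ! j) {a,b}" using cn[of "{a,c}" "{a,b}" a] e tri by (auto simp: doubleton_eq_iff)
      have c2: "connected_in R D (xs ! j) {b,c}" using cn[of "{a,c}" "{b,c}" c] e tri by (auto simp: doubleton_eq_iff)
      have "{a,b} \<noteq> {b,c}" using tri by (auto simp: doubleton_eq_iff)
      thus ?thesis using two_idx[of "{a,b}" j xs "{b,c}"] c1 c2 e by auto
    next
      case o
      have "xs ! j = l1 ! (j - 3)" using o lE0 unfolding xs_def by (auto simp: nth_append)
      hence eE1: "xs ! j \<in> E1" using o l1 by auto
      then obtain t where t: "t \<in> xs ! j" "t \<in> T" unfolding E1_def by auto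
      have e0: "xs ! j \<notin> set E0" using eE1 unfolding E1_def by auto
      have "\<exists>x y. x \<in> set E0 \<and> y \<in> set E0 \<and> x \<noteq> y \<and> t \<in> x \<and> t \<in> y"
      proof -
        have "t = a \<or> t = b \<or> t = c" using t(2) unfolding T_def by auto
        have n1: "{a,b} \<noteq> {a,c}" "{a,b} \<noteq> {b,c}" "{b,c} \<noteq> {a,c}" using tri by (auto simp: doubleton_eq_iff)
        have m: "{a,b} \<in> set E0" "{b,c} \<in> set E0" "{a,c} \<in> set E0" unfolding E0_def by auto
        show ?thesis
        proof (cases "t = a")
          case True thus ?thesis using n1 m by blast
        next
          case False
          show ?thesis
          proof (cases "t = b")
            case True thus ?thesis using n1 m by blast
          next
            case False
            hence "t = c" using \<open>t = a \<or> t = b \<or> t = c\<close> \<open>t \<noteq> a\<close> by blast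
            thus ?thesis using n1 m by blast
          qed
        qed
      qed
      then obtain x y where xy: "x \<in> set E0" "y \<in> set E0" "x \<noteq> y" "t \<in> x" "t \<in> y" by blast
      have "connected_in R D (xs ! j) x" using cn[of "xs ! j" x t] eR xy E0R e0 t by auto
      moreover have "connected_in R D (xs ! j) y" using cn[of "xs ! j" y t] eR xy E0R e0 t by auto
      ultimately show ?thesis using two_idx[of x j xs y] xy tk0[OF o(1)] by auto
    next
      case t
      have "xs ! j = l2 ! (j - 3 - length l1)" using t j len lE0 unfolding xs_def by (auto simp: nth_append)
      hence eE2: "xs ! j \<in> E2" using t j len l2 by auto
      have eS: "xs ! j \<in> S2 A" using eR R by auto
      obtain u v where uv: "xs ! j = {u,v}" "u \<noteq> v" "u \<in> A" "v \<in> A" using S2_elem[OF eS] by blast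
      have uT: "u \<notin> T" using eE2 uv unfolding E2_def by auto
      have d1: "{u,a} \<in> R \<or> {u,b} \<in> R" using DR[of a b u] tri uT uv unfolding T_def by auto
      have d2: "{u,b} \<in> R \<or> {u,c} \<in> R" using DR[of b c u] tri uT uv unfolding T_def by auto
      have d3: "{u,a} \<in> R \<or> {u,c} \<in> R" using DR[of a c u] tri uT uv unfolding T_def by auto
      have inE1: "{u,w} \<in> E1" if "{u,w} \<in> R" "w \<in> T" for w
      proof -
        have "{u,w} \<notin> set E0" using uT E0T by auto
        thus ?thesis unfolding E1_def using that by auto
      qed
      have cw: "connected_in R D (xs ! j) {u,w}" if "{u,w} \<in> R" "w \<in> T" for w
      proof -
        have "xs ! j \<noteq> {u,w}" using eE2 that unfolding E2_def by auto
        thus ?thesis using cn[of "xs ! j" "{u,w}" u] eR that uv by auto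
      qed
      have tw: "{u,w} \<in> set (take j xs)" if "{u,w} \<in> R" "w \<in> T" for w
        using inE1[OF that] l1 tk1[OF t] by auto
      have dif: "{u,w} \<noteq> {u,w'}" if "w \<noteq> w'" "w \<in> T" "w' \<in> T" for w w'
        using that uT by (auto simp: doubleton_eq_iff)
      have "\<exists>w w'. w \<in> T \<and> w' \<in> T \<and> w \<noteq> w' \<and> {u,w} \<in> R \<and> {u,w'} \<in> R"
        using d1 d2 d3 tri unfolding T_def by blast
      then obtain w w' where ww: "w \<in> T" "w' \<in> T" "w \<noteq> w'" "{u,w} \<in> R" "{u,w'} \<in> R" by blast
      show ?thesis using two_idx[of "{u,w}" j xs "{u,w'}" "\<lambda>z. connected_in R D (xs ! j) z"]
        tw cw dif ww by auto
    qed
  qed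
  show ?thesis unfolding linked_def D_def[symmetric]
    using dxs sxs first rest by blast
qed


theorem proposition51:
  fixes V :: "'v set" and A :: "'a set" and F :: "('v \<Rightarrow> 'a rel) \<Rightarrow> 'a set"
  assumes "finite V" and "V \<noteq> {}" and "finite A"
    and "consular_rule V A F"
    and "irreducible V A F" and "weakly_viable V A F"
    and "SPP V A F" and "SPO V A F"
  shows "(\<forall>M\<in>{alpha A L \<inter> (F ` profiles V A \<times> F ` profiles V A) | L. linear_order_on A L}.
            linear_order_on (F ` profiles V A) M)
      \<and> linked (F ` profiles V A)
          {alpha A L \<inter> (F ` profiles V A \<times> F ` profiles V A) | L. linear_order_on A L}"
proof -
  note fV = assms(1) and fin = assms(3) and cons = assms(4) and irr = assms(5) and wv = assms(6)
    and spp = assms(7) and spo = assms(8)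
  define R where "R = F ` profiles V A"
  have R: "R \<subseteq> S2 A" unfolding R_def using F_S2[OF cons] by blast
  have part1: "\<forall>M\<in>{alpha A L \<inter> (R \<times> R) | L. linear_order_on A L}. linear_order_on R M"
    using alpha_lin[OF _ R] by blast
  define U where "U L = (\<lambda>i. if i \<in> V then L else ({} :: 'a rel))" for L
  have Up: "linear_order_on A L \<Longrightarrow> U L \<in> profiles V A" for L unfolding U_def profiles_def by auto
  have ex: "\<exists>X\<in>R. domn L X R" if L: "linear_order_on A L" for L
  proof
    show "F (U L) \<in> R" unfolding R_def using Up[OF L] by blast
    show "domn L (F (U L)) R" unfolding domn_def
    proof
      fix Y assume "Y \<in> R"
      then obtain P' where P': "P' \<in> profiles V A" "Y = F P'" unfolding R_def by blast
      show "(best L (F (U L)), best L Y) \<in> L \<and> (worst L (F (U L)), worst L Y) \<in> L"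
        using unan_dom[OF fV cons spo spp L P'(1)] P'(2) unfolding U_def by simp
    qed
  qed
  have DR: "{t,y1} \<in> R \<or> {t,y2} \<in> R" if h: "{y1,y2} \<in> R" "t \<in> A" "t \<notin> {y1,y2}" for y1 y2 t
  proof -
    obtain P where P: "P \<in> profiles V A" "t \<in> F P" using wv h(2) unfolding weakly_viable_def by blast
    have "F P \<in> R" unfolding R_def using P(1) by blast
    thus ?thesis using Dprop[OF fin R ex h(1) _ P(2) h(3)] by blast
  qed
  obtain L0 where L0: "linear_order_on A L0" using ex_lin[OF fin] by blast
  have "F (U L0) \<in> S2 A" using F_S2[OF cons Up[OF L0]] .
  then obtain a b where ab: "F (U L0) = {a,b}" "a \<noteq> b" "a \<in> A" "b \<in> A" using S2_elem by blast
  have abR: "{a,b} \<in> R" unfolding R_def using ab(1) Up[OF L0] by (metis image_eqI)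
  have single: "{x} \<notin> R" for x
  proof
    assume "{x} \<in> R" hence "{x} \<in> S2 A" using R by blast
    thus False unfolding S2_def by simp
  qed
  have tri: "\<exists>x y. a \<noteq> x \<and> x \<noteq> y \<and> a \<noteq> y \<and> {a,x} \<in> R \<and> {x,y} \<in> R \<and> {a,y} \<in> R"
  proof (rule ccontr)
    assume nt: "\<not> ?thesis"
    define B where "B = {x\<in>A. {a,x} \<notin> R}"
    define C where "C = {x\<in>A. {a,x} \<in> R}"
    have BC: "B \<union> C = A" "B \<inter> C = {}" unfolding B_def C_def by auto
    have aB: "a \<in> B" unfolding B_def using ab single by simp
    have bC: "b \<in> C" unfolding C_def using ab abR by simp
    have cr: "crossing B C (F ` profiles V A)"
      unfolding crossing_def R_def[symmetric]
    proof
      fix X assume X: "X \<in> R"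
      hence "X \<in> S2 A" using R by blast
      then obtain x y where xy: "X = {x,y}" "x \<noteq> y" "x \<in> A" "y \<in> A" using S2_elem by blast
      have notCC: "\<not> (x \<in> C \<and> y \<in> C)"
      proof
        assume "x \<in> C \<and> y \<in> C"
        hence "{a,x} \<in> R" "{a,y} \<in> R" unfolding C_def by auto
        moreover have "a \<noteq> x" "a \<noteq> y" using calculation single by auto
        ultimately show False using nt xy X by blast
      qed
      have notBB: "\<not> (x \<in> B \<and> y \<in> B)"
      proof
        assume xyB: "x \<in> B \<and> y \<in> B"
        hence n: "{a,x} \<notin> R" "{a,y} \<notin> R" unfolding B_def by auto
        have "a \<noteq> x" using n X xy by (metis insert_commute)
        moreover have "a \<noteq> y" using n X xy by (metis insert_commute)
        ultimately have "{a,x} \<in> R \<or> {a,y} \<in> R" using DR[of x y a] X xy ab by auto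
        thus False using n by blast
      qed
      have "x \<in> B \<or> x \<in> C" "y \<in> B \<or> y \<in> C" using BC xy by auto
      hence "(x \<in> B \<and> y \<in> C) \<or> (y \<in> B \<and> x \<in> C)" using notCC notBB by blast
      thus "\<exists>b c. X = {b,c} \<and> b \<in> B \<and> c \<in> C" using xy(1) by (metis insert_commute)
    qed
    have "reducible V A F" using reduc[OF fV fin cons spo spp BC _ _ cr] aB bC by blast
    thus False using irr unfolding irreducible_def by blast
  qed
  then obtain x y where xy: "a \<noteq> x" "x \<noteq> y" "a \<noteq> y" "{a,x} \<in> R" "{x,y} \<in> R" "{a,y} \<in> R" by blast
  have "linked R {alpha A L \<inter> (R \<times> R) | L. linear_order_on A L}"
    using linked_tri[OF fin R _ xy] DR by blast
  thus ?thesis using part1 unfolding R_def by blast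
qed

end
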